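(* Let $m,n$ be integers with $0\le m\le n$. If $H\le G_n$ and $H$ has derived length $m$, then $H$ is isomorphic to a subgroup of $G_m$.
   Context: For a group $A$, $A\wr\mathbf{Z}=(\bigoplus_{i\in\mathbf{Z}}A)\rtimes\mathbf{Z}$ is the restricted wreath product with $\mathbf{Z}$ acting by index shift. $G_0$ is the trivial group and $G_n=\bigoplus_{i\in\mathbf{Z}}(G_{n-1}\wr\mathbf{Z})$ for $n\ge1$. *)

theory Defs
  imports "HOL-Algebra.Algebra"
begin

text \<open>A universal type hosting the elements of all groups G_n.
  Leaf represents the unique element of G_0; an element of
  G_(n+1) = direct sum over Z of (G_n wr Z) is Node F, where F i = (f, k) is the i-th
  coordinate, an element of G_n wr Z = (direct sum over Z of G_n) semidirect Z,
  f being the (finitely supported) base function and k the Z-component.\<close>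

datatype W = Leaf | Node "int \<Rightarrow> (int \<Rightarrow> W) \<times> int"

fun kids :: "W \<Rightarrow> int \<Rightarrow> (int \<Rightarrow> W) \<times> int" where
  "kids Leaf = (\<lambda>_. (\<lambda>_. Leaf, 0))"
| "kids (Node F) = F"

primrec G_one :: "nat \<Rightarrow> W" where
  "G_one 0 = Leaf"
| "G_one (Suc n) = Node (\<lambda>i. (\<lambda>j. G_one n, 0))"

primrec G_carrier :: "nat \<Rightarrow> W set" where
  "G_carrier 0 = {Leaf}"
| "G_carrier (Suc n) =
     {Node F | F.
        finite {i. F i \<noteq> (\<lambda>j. G_one n, 0)} \<and>
        (\<forall>i. (\<forall>j. fst (F i) j \<in> G_carrier n) \<and>
             finite {j. fst (F i) j \<noteq> G_one n})}"

text \<open>Multiplication in A wr Z: (f,k)(g,l) = (f \<cdot> (k\<cdot>g), k+l), where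
  (k\<cdot>g)(j) = g(j - k) is the index shift; direct sums are multiplied coordinatewise.\<close>
primrec G_mult :: "nat \<Rightarrow> W \<Rightarrow> W \<Rightarrow> W" where
  "G_mult 0 x y = Leaf"
| "G_mult (Suc n) x y =
     Node (\<lambda>i. (\<lambda>j. G_mult n (fst (kids x i) j) (fst (kids y i) (j - snd (kids x i))),
                 snd (kids x i) + snd (kids y i)))"

definition G :: "nat \<Rightarrow> W monoid" where
  "G n = \<lparr>carrier = G_carrier n, monoid.mult = G_mult n, one = G_one n\<rparr>"

definition has_derived_length :: "('a, 'b) monoid_scheme \<Rightarrow> 'a set \<Rightarrow> nat \<Rightarrow> bool" where
  "has_derived_length K H m \<longleftrightarrow>
     (derived K ^^ m) H = {\<one>\<^bsub>K\<^esub>} \<and> (\<forall>k<m. (derived K ^^ k) H \<noteq> {\<one>\<^bsub>K\<^esub>})"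

end

theory Submission
  imports Defs "HOL-Library.Countable"
begin

definition WR :: "nat \<Rightarrow> ((int \<Rightarrow> W) \<times> int) monoid" where
  "WR n = \<lparr>carrier = {x. (\<forall>j. fst x j \<in> G_carrier n) \<and> finite {j. fst x j \<noteq> G_one n}},
     monoid.mult = (\<lambda>x y. (\<lambda>j. G_mult n (fst x j) (fst y (j - snd x)), snd x + snd y)),
     one = (\<lambda>j. G_one n, 0)\<rparr>"

lemma G_simps: "carrier (G n) = G_carrier n" "x \<otimes>\<^bsub>G n\<^esub> y = G_mult n x y" "\<one>\<^bsub>G n\<^esub> = G_one n"
  by (auto simp: G_def)

lemma WR_simps: "carrier (WR n) = {x. (\<forall>j. fst x j \<in> carrier (G n)) \<and> finite {j. fst x j \<noteq> \<one>\<^bsub>G n\<^esub>}}"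
  "x \<otimes>\<^bsub>WR n\<^esub> y = (\<lambda>j. fst x j \<otimes>\<^bsub>G n\<^esub> fst y (j - snd x), snd x + snd y)"
  "\<one>\<^bsub>WR n\<^esub> = (\<lambda>j. \<one>\<^bsub>G n\<^esub>, 0)"
  by (auto simp: WR_def G_def)

lemma GS_carrier: "carrier (G (Suc n)) = Node ` {F. (\<forall>i. F i \<in> carrier (WR n)) \<and> finite {i. F i \<noteq> \<one>\<^bsub>WR n\<^esub>}}"
  by (auto simp: G_def WR_def)

lemma GS_mult: "x \<otimes>\<^bsub>G (Suc n)\<^esub> y = Node (\<lambda>i. kids x i \<otimes>\<^bsub>WR n\<^esub> kids y i)"
  by (auto simp: G_def WR_def)

lemma GS_one: "\<one>\<^bsub>G (Suc n)\<^esub> = Node (\<lambda>i. \<one>\<^bsub>WR n\<^esub>)"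
  by (auto simp: G_def WR_def)

lemma finite_shift: "finite {j. P j} \<Longrightarrow> finite {j::int. P (j + k)}"
proof -
  assume "finite {j. P j}"
  then have "finite ((\<lambda>j. j - k) ` {j. P j})" by simp
  moreover have "{j::int. P (j + k)} = (\<lambda>j. j - k) ` {j. P j}"
    by (auto simp: image_iff intro!: exI[of _ "_ + k"])
  ultimately show ?thesis by simp
qed

lemma group_WR:
  assumes A: "group (G n)"
  shows "group (WR n)"
proof (rule groupI)
  interpret A: group "G n" by (rule A)
  fix x y assume x: "x \<in> carrier (WR n)" and y: "y \<in> carrier (WR n)"
  have "{j. fst x j \<otimes>\<^bsub>G n\<^esub> fst y (j - snd x) \<noteq> \<one>\<^bsub>G n\<^esub>} \<subseteq>
     {j. fst x j \<noteq> \<one>\<^bsub>G n\<^esub>} \<union> {j. fst y (j + (- snd x)) \<noteq> \<one>\<^bsub>G n\<^esub>}"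
    using x y by (auto simp: WR_simps)
  moreover have "finite {j. fst y (j + (- snd x)) \<noteq> \<one>\<^bsub>G n\<^esub>}"
    by (rule finite_shift) (use y in \<open>simp add: WR_simps\<close>)
  ultimately show "x \<otimes>\<^bsub>WR n\<^esub> y \<in> carrier (WR n)"
    using x y by (auto simp: WR_simps intro: finite_subset)
next
  interpret A: group "G n" by (rule A)
  show "\<one>\<^bsub>WR n\<^esub> \<in> carrier (WR n)" by (simp add: WR_simps)
next
  interpret A: group "G n" by (rule A)
  fix x y z assume x: "x \<in> carrier (WR n)" and y: "y \<in> carrier (WR n)" and z: "z \<in> carrier (WR n)"
  show "x \<otimes>\<^bsub>WR n\<^esub> y \<otimes>\<^bsub>WR n\<^esub> z = x \<otimes>\<^bsub>WR n\<^esub> (y \<otimes>\<^bsub>WR n\<^esub> z)"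
    using x y z by (auto simp: WR_simps A.m_assoc algebra_simps)
next
  interpret A: group "G n" by (rule A)
  fix x assume x: "x \<in> carrier (WR n)"
  then show "\<one>\<^bsub>WR n\<^esub> \<otimes>\<^bsub>WR n\<^esub> x = x" by (auto simp: WR_simps)
next
  interpret A: group "G n" by (rule A)
  fix x assume x: "x \<in> carrier (WR n)"
  let ?y = "(\<lambda>j. inv\<^bsub>G n\<^esub> (fst x (j + snd x)), - snd x)"
  have "finite {j. fst x (j + snd x) \<noteq> \<one>\<^bsub>G n\<^esub>}"
    by (rule finite_shift) (use x in \<open>simp add: WR_simps\<close>)
  then have "?y \<in> carrier (WR n)" using x by (auto simp: WR_simps)
  moreover have "?y \<otimes>\<^bsub>WR n\<^esub> x = \<one>\<^bsub>WR n\<^esub>" using x by (auto simp: WR_simps)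
  ultimately show "\<exists>y\<in>carrier (WR n). y \<otimes>\<^bsub>WR n\<^esub> x = \<one>\<^bsub>WR n\<^esub>" by blast
qed

lemma group_GS:
  assumes A: "group (WR n)"
  shows "group (G (Suc n))"
proof (rule groupI)
  interpret A: group "WR n" by (rule A)
  fix x y assume x: "x \<in> carrier (G (Suc n))" and y: "y \<in> carrier (G (Suc n))"
  then obtain F F' where F: "x = Node F" "\<forall>i. F i \<in> carrier (WR n)" "finite {i. F i \<noteq> \<one>\<^bsub>WR n\<^esub>}"
    and F': "y = Node F'" "\<forall>i. F' i \<in> carrier (WR n)" "finite {i. F' i \<noteq> \<one>\<^bsub>WR n\<^esub>}"
    by (auto simp: GS_carrier)
  have "{i. F i \<otimes>\<^bsub>WR n\<^esub> F' i \<noteq> \<one>\<^bsub>WR n\<^esub>} \<subseteq> {i. F i \<noteq> \<one>\<^bsub>WR n\<^esub>} \<union> {i. F' i \<noteq> \<one>\<^bsub>WR n\<^esub>}"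
    using F F' by auto
  then have "finite {i. F i \<otimes>\<^bsub>WR n\<^esub> F' i \<noteq> \<one>\<^bsub>WR n\<^esub>}"
    using F F' by (meson finite_Un finite_subset)
  then show "x \<otimes>\<^bsub>G (Suc n)\<^esub> y \<in> carrier (G (Suc n))"
    using F F' by (auto simp: GS_carrier GS_mult intro!: imageI)
next
  interpret A: group "WR n" by (rule A)
  show "\<one>\<^bsub>G (Suc n)\<^esub> \<in> carrier (G (Suc n))" by (auto simp: GS_carrier GS_one)
next
  interpret A: group "WR n" by (rule A)
  fix x y z assume "x \<in> carrier (G (Suc n))" "y \<in> carrier (G (Suc n))" "z \<in> carrier (G (Suc n))"
  then show "x \<otimes>\<^bsub>G (Suc n)\<^esub> y \<otimes>\<^bsub>G (Suc n)\<^esub> z = x \<otimes>\<^bsub>G (Suc n)\<^esub> (y \<otimes>\<^bsub>G (Suc n)\<^esub> z)"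
    by (auto simp: GS_carrier GS_mult A.m_assoc)
next
  interpret A: group "WR n" by (rule A)
  fix x assume "x \<in> carrier (G (Suc n))"
  then show "\<one>\<^bsub>G (Suc n)\<^esub> \<otimes>\<^bsub>G (Suc n)\<^esub> x = x"
    by (auto simp: GS_carrier GS_mult GS_one)
next
  interpret A: group "WR n" by (rule A)
  fix x assume "x \<in> carrier (G (Suc n))"
  then obtain F where F: "x = Node F" "\<forall>i. F i \<in> carrier (WR n)" "finite {i. F i \<noteq> \<one>\<^bsub>WR n\<^esub>}"
    by (auto simp: GS_carrier)
  let ?y = "Node (\<lambda>i. inv\<^bsub>WR n\<^esub> (F i))"
  have "{i. inv\<^bsub>WR n\<^esub> (F i) \<noteq> \<one>\<^bsub>WR n\<^esub>} = {i. F i \<noteq> \<one>\<^bsub>WR n\<^esub>}"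
    using F by auto
  then have "?y \<in> carrier (G (Suc n))" using F by (auto simp: GS_carrier)
  moreover have "?y \<otimes>\<^bsub>G (Suc n)\<^esub> x = \<one>\<^bsub>G (Suc n)\<^esub>" using F by (auto simp: GS_mult GS_one)
  ultimately show "\<exists>y\<in>carrier (G (Suc n)). y \<otimes>\<^bsub>G (Suc n)\<^esub> x = \<one>\<^bsub>G (Suc n)\<^esub>" by blast
qed

lemma group_G: "group (G n)"
proof (induction n)
  case 0
  show ?case by (rule groupI) (auto simp: G_def)
next
  case (Suc n)
  then show ?case by (intro group_GS group_WR)
qed

lemma group_WR': "group (WR n)" by (rule group_WR[OF group_G])

lemma WR_inv:
  assumes "x \<in> carrier (WR n)"
  shows "inv\<^bsub>WR n\<^esub> x = (\<lambda>j. inv\<^bsub>G n\<^esub> (fst x (j + snd x)), - snd x)"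
proof -
  interpret A: group "G n" by (rule group_G)
  interpret B: group "WR n" by (rule group_WR')
  have "finite {j. fst x (j + snd x) \<noteq> \<one>\<^bsub>G n\<^esub>}"
    by (rule finite_shift) (use assms in \<open>simp add: WR_simps\<close>)
  then show ?thesis using assms
    by (intro B.inv_equality) (auto simp: WR_simps)
qed

lemma GS_inv:
  assumes "Node F \<in> carrier (G (Suc n))"
  shows "inv\<^bsub>G (Suc n)\<^esub> (Node F) = Node (\<lambda>i. inv\<^bsub>WR n\<^esub> (F i))"
proof -
  interpret A: group "WR n" by (rule group_WR')
  interpret B: group "G (Suc n)" by (rule group_G)
  have F: "\<forall>i. F i \<in> carrier (WR n)" "finite {i. F i \<noteq> \<one>\<^bsub>WR n\<^esub>}"
    using assms by (auto simp: GS_carrier)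
  have "{i. inv\<^bsub>WR n\<^esub> (F i) \<noteq> \<one>\<^bsub>WR n\<^esub>} = {i. F i \<noteq> \<one>\<^bsub>WR n\<^esub>}"
    using F by auto
  then show ?thesis using assms F
    by (intro B.inv_equality) (auto simp: GS_carrier GS_mult GS_one)
qed

lemma derived_iter_consistent:
  assumes "group M" "subgroup N M" "S \<subseteq> N"
  shows "(derived (M\<lparr>carrier := N\<rparr>) ^^ k) S = (derived M ^^ k) S"
proof -
  interpret M: group M by (rule assms(1))
  interpret GN: group "M\<lparr>carrier := N\<rparr>" by (rule M.subgroup_imp_group[OF assms(2)])
  show ?thesis
  proof (induction k)
    case 0 then show ?case by simp
  next
    case (Suc k)
    have "(derived (M\<lparr>carrier := N\<rparr>) ^^ k) S \<subseteq> N"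
      using GN.exp_of_derived_in_carrier[of S k] assms(3) by simp
    then show ?case using Suc M.derived_consistent[OF _ assms(2)] by simp
  qed
qed

lemma derived_hom_sub:
  assumes "group M" "group K" "subgroup N M" "h \<in> hom (M\<lparr>carrier := N\<rparr>) K" "S \<subseteq> N"
  shows "(derived K ^^ k) (h ` S) = h ` ((derived M ^^ k) S)"
proof -
  interpret M: group M by (rule assms(1))
  interpret GN: group "M\<lparr>carrier := N\<rparr>" by (rule M.subgroup_imp_group[OF assms(3)])
  interpret h: group_hom "M\<lparr>carrier := N\<rparr>" K h
    unfolding group_hom_def group_hom_axioms_def using GN.is_group assms(2,4) by auto
  have "(derived K ^^ k) (h ` S) = h ` ((derived (M\<lparr>carrier := N\<rparr>) ^^ k) S)"
    using h.exp_of_derived_img[of S k] assms(5) by simp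
  then show ?thesis using derived_iter_consistent[OF assms(1,3,5)] by simp
qed

definition emb :: "nat \<Rightarrow> W set \<Rightarrow> nat \<Rightarrow> bool" where
  "emb n H m \<longleftrightarrow> (\<exists>\<phi>. \<phi> \<in> hom ((G n)\<lparr>carrier := H\<rparr>) (G m) \<and> inj_on \<phi> H)"

lemma combine:
  fixes K :: "('a, 'b) monoid_scheme" and g :: "'c::countable \<Rightarrow> 'a \<Rightarrow> (int \<Rightarrow> W) \<times> int"
  assumes hom: "\<And>c. g c \<in> hom K (WR k)"
    and fin: "\<And>x. x \<in> carrier K \<Longrightarrow> finite {c. g c x \<noteq> \<one>\<^bsub>WR k\<^esub>}"
    and inj: "\<And>x y. x \<in> carrier K \<Longrightarrow> y \<in> carrier K \<Longrightarrow> (\<forall>c. g c x = g c y) \<Longrightarrow> x = y"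
  shows "\<exists>\<phi>. \<phi> \<in> hom K (G (Suc k)) \<and> inj_on \<phi> (carrier K)"
proof -
  interpret W: group "WR k" by (rule group_WR')
  define e :: "'c \<Rightarrow> int" where "e = (\<lambda>c. int (to_nat c))"
  have inje: "inj e" unfolding e_def by (simp add: inj_def)
  define \<phi> where "\<phi> = (\<lambda>x. Node (\<lambda>i. if i \<in> range e then g (inv_into UNIV e i) x else \<one>\<^bsub>WR k\<^esub>))"
  have gc: "g c x \<in> carrier (WR k)" if "x \<in> carrier K" for c x
    using hom that by (auto simp: hom_def)
  have ie: "inv_into UNIV e (e c) = c" for c using inje by simp
  have "\<phi> \<in> hom K (G (Suc k))"
  proof (rule homI)
    fix x assume x: "x \<in> carrier K"
    have "{i. (if i \<in> range e then g (inv_into UNIV e i) x else \<one>\<^bsub>WR k\<^esub>) \<noteq> \<one>\<^bsub>WR k\<^esub>} \<subseteq> e ` {c. g c x \<noteq> \<one>\<^bsub>WR k\<^esub>}"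
      by (auto simp: ie)
    then have "finite {i. (if i \<in> range e then g (inv_into UNIV e i) x else \<one>\<^bsub>WR k\<^esub>) \<noteq> \<one>\<^bsub>WR k\<^esub>}"
      using fin[OF x] by (meson finite_imageI finite_subset)
    then show "\<phi> x \<in> carrier (G (Suc k))"
      unfolding \<phi>_def GS_carrier using gc[OF x] by (auto intro!: imageI)
  next
    fix x y assume x: "x \<in> carrier K" and y: "y \<in> carrier K"
    show "\<phi> (x \<otimes>\<^bsub>K\<^esub> y) = \<phi> x \<otimes>\<^bsub>G (Suc k)\<^esub> \<phi> y"
      unfolding \<phi>_def GS_mult using hom x y by (auto simp: hom_def)
  qed
  moreover have "inj_on \<phi> (carrier K)"
  proof (rule inj_onI)
    fix x y assume x: "x \<in> carrier K" and y: "y \<in> carrier K" and eq: "\<phi> x = \<phi> y"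
    have "g c x = g c y" for c
      using fun_cong[OF eq[unfolded \<phi>_def, simplified], of "e c"] by (simp add: ie)
    then show "x = y" using inj[OF x y] by blast
  qed
  ultimately show ?thesis by blast
qed

lemma hom_one_sub:
  assumes "group M" "group K" "subgroup P M" "\<phi> \<in> hom (M\<lparr>carrier := P\<rparr>) K"
  shows "\<phi> \<one>\<^bsub>M\<^esub> = \<one>\<^bsub>K\<^esub>"
proof -
  interpret M: group M by (rule assms(1))
  interpret GN: group "M\<lparr>carrier := P\<rparr>" by (rule M.subgroup_imp_group[OF assms(3)])
  interpret h: group_hom "M\<lparr>carrier := P\<rparr>" K \<phi>
    unfolding group_hom_def group_hom_axioms_def using GN.is_group assms by auto
  show ?thesis using h.hom_one by simp
qed

lemma hom_sub_imgsub:
  assumes "group M" "group K" "subgroup P M" "\<phi> \<in> hom (M\<lparr>carrier := P\<rparr>) K"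
  shows "subgroup (\<phi> ` P) K"
proof -
  interpret M: group M by (rule assms(1))
  interpret GN: group "M\<lparr>carrier := P\<rparr>" by (rule M.subgroup_imp_group[OF assms(3)])
  interpret h: group_hom "M\<lparr>carrier := P\<rparr>" K \<phi>
    unfolding group_hom_def group_hom_axioms_def using GN.is_group assms by auto
  show ?thesis using h.img_is_subgroup by simp
qed

lemma GS_elem:
  assumes "x \<in> carrier (G (Suc n))"
  shows "x = Node (\<lambda>i. kids x i)" "kids x i \<in> carrier (WR n)" "finite {i. kids x i \<noteq> \<one>\<^bsub>WR n\<^esub>}"
  using assms by (auto simp: GS_carrier)

lemma GS_eqI:
  assumes "x \<in> carrier (G (Suc n))" "y \<in> carrier (G (Suc n))" "\<And>i. kids x i = kids y i"
  shows "x = y"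
proof -
  have "kids x = kids y" using assms(3) by (rule ext)
  then show ?thesis using GS_elem(1)[OF assms(1)] GS_elem(1)[OF assms(2)] by simp
qed

lemma kids_one [simp]: "kids \<one>\<^bsub>G (Suc n)\<^esub> i = \<one>\<^bsub>WR n\<^esub>"
  by (simp add: GS_one)

lemma kids_mult [simp]: "kids (x \<otimes>\<^bsub>G (Suc n)\<^esub> y) i = kids x i \<otimes>\<^bsub>WR n\<^esub> kids y i"
  by (simp add: GS_mult)

lemma kids_hom: "(\<lambda>x. kids x i) \<in> hom (G (Suc n)) (WR n)"
  by (rule homI) (auto simp: GS_elem)

lemma proj_hom:
  assumes "subgroup N (WR n)" "\<forall>z\<in>N. snd z = 0"
  shows "(\<lambda>z. fst z j) \<in> hom ((WR n)\<lparr>carrier := N\<rparr>) (G n)"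
proof (rule homI)
  fix x assume "x \<in> carrier ((WR n)\<lparr>carrier := N\<rparr>)"
  then have "x \<in> carrier (WR n)" using assms(1) subgroup.mem_carrier by force
  then show "fst x j \<in> carrier (G n)" by (simp add: WR_simps)
next
  fix x y assume "x \<in> carrier ((WR n)\<lparr>carrier := N\<rparr>)" "y \<in> carrier ((WR n)\<lparr>carrier := N\<rparr>)"
  then show "fst (x \<otimes>\<^bsub>(WR n)\<lparr>carrier := N\<rparr>\<^esub> y) j = fst x j \<otimes>\<^bsub>G n\<^esub> fst y j"
    using assms by (simp add: WR_simps)
qed

lemma caseA:
  assumes IH: "\<And>m P. subgroup P (G n) \<Longrightarrow> (derived (G n) ^^ m) P = {\<one>\<^bsub>G n\<^esub>} \<Longrightarrow> emb n P m"
    and Q: "subgroup Q (WR n)" and dl: "(derived (WR n) ^^ Suc k) Q = {\<one>\<^bsub>WR n\<^esub>}"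
    and z: "\<forall>x\<in>Q. snd x = 0"
  shows "\<exists>g::int\<times>int \<Rightarrow> (int \<Rightarrow> W) \<times> int \<Rightarrow> (int \<Rightarrow> W) \<times> int.
           (\<forall>c. g c \<in> hom ((WR n)\<lparr>carrier := Q\<rparr>) (WR k)) \<and> (\<forall>x\<in>Q. finite {c. g c x \<noteq> \<one>\<^bsub>WR k\<^esub>})
           \<and> (\<forall>x\<in>Q. \<forall>y\<in>Q. (\<forall>c. g c x = g c y) \<longrightarrow> x = y)"
proof -
  interpret A: group "G n" by (rule group_G)
  interpret B: group "WR n" by (rule group_WR')
  interpret C: group "G (Suc k)" by (rule group_G)
  interpret D: group "WR k" by (rule group_WR')
  have Qc: "x \<in> carrier (WR n)" if "x \<in> Q" for x using Q that subgroup.mem_carrier by force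
  let ?P = "\<lambda>j. (\<lambda>x. fst x j) ` Q"
  have ph: "(\<lambda>x. fst x j) \<in> hom ((WR n)\<lparr>carrier := Q\<rparr>) (G n)" for j by (rule proj_hom[OF Q z])
  have "\<exists>\<phi>. \<phi> \<in> hom ((G n)\<lparr>carrier := ?P j\<rparr>) (G (Suc k)) \<and> inj_on \<phi> (?P j)" for j
  proof -
    have sg: "subgroup (?P j) (G n)"
      by (rule hom_sub_imgsub[OF B.is_group A.is_group Q ph])
    have "(derived (G n) ^^ Suc k) (?P j) = (\<lambda>x. fst x j) ` ((derived (WR n) ^^ Suc k) Q)"
      by (rule derived_hom_sub[OF B.is_group A.is_group Q ph]) simp
    also have "\<dots> = {\<one>\<^bsub>G n\<^esub>}" using dl by (simp add: WR_simps)
    finally show ?thesis using IH[OF sg] unfolding emb_def by blast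
  qed
  then obtain \<phi> where \<phi>: "\<And>j. \<phi> j \<in> hom ((G n)\<lparr>carrier := ?P j\<rparr>) (G (Suc k))" "\<And>j. inj_on (\<phi> j) (?P j)"
    by metis
  have \<phi>1: "\<phi> j \<one>\<^bsub>G n\<^esub> = \<one>\<^bsub>G (Suc k)\<^esub>" for j
    by (rule hom_one_sub[OF A.is_group C.is_group hom_sub_imgsub[OF B.is_group A.is_group Q ph] \<phi>(1)])
  have \<phi>c: "\<phi> j (fst x j) \<in> carrier (G (Suc k))" if "x \<in> Q" for x j
    using \<phi>(1)[of j] that by (auto simp: hom_def)
  define g :: "int\<times>int \<Rightarrow> (int \<Rightarrow> W) \<times> int \<Rightarrow> (int \<Rightarrow> W) \<times> int"
    where "g = (\<lambda>c x. kids (\<phi> (fst c) (fst x (fst c))) (snd c))"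
  have "g c \<in> hom ((WR n)\<lparr>carrier := Q\<rparr>) (WR k)" for c
  proof (rule homI)
    fix x assume "x \<in> carrier ((WR n)\<lparr>carrier := Q\<rparr>)"
    then show "g c x \<in> carrier (WR k)" using \<phi>c GS_elem(2) by (simp add: g_def)
  next
    fix x y assume x: "x \<in> carrier ((WR n)\<lparr>carrier := Q\<rparr>)" and y: "y \<in> carrier ((WR n)\<lparr>carrier := Q\<rparr>)"
    have "\<phi> (fst c) (fst (x \<otimes>\<^bsub>WR n\<^esub> y) (fst c)) = \<phi> (fst c) (fst x (fst c)) \<otimes>\<^bsub>G (Suc k)\<^esub> \<phi> (fst c) (fst y (fst c))"
      using x y z \<phi>(1)[of "fst c"] by (simp add: WR_simps hom_def)
    then show "g c (x \<otimes>\<^bsub>(WR n)\<lparr>carrier := Q\<rparr>\<^esub> y) = g c x \<otimes>\<^bsub>WR k\<^esub> g c y"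
      by (simp add: g_def)
  qed
  moreover have "finite {c. g c x \<noteq> \<one>\<^bsub>WR k\<^esub>}" if x: "x \<in> Q" for x
  proof -
    have "{c. g c x \<noteq> \<one>\<^bsub>WR k\<^esub>} \<subseteq> Sigma {j. fst x j \<noteq> \<one>\<^bsub>G n\<^esub>} (\<lambda>j. {l. kids (\<phi> j (fst x j)) l \<noteq> \<one>\<^bsub>WR k\<^esub>})"
      by (auto simp: g_def \<phi>1)
    moreover have "finite {j. fst x j \<noteq> \<one>\<^bsub>G n\<^esub>}" using Qc[OF x] by (simp add: WR_simps)
    moreover have "finite {l. kids (\<phi> j (fst x j)) l \<noteq> \<one>\<^bsub>WR k\<^esub>}" for j
      using GS_elem(3)[OF \<phi>c[OF x]] .
    ultimately show ?thesis by (meson finite_SigmaI finite_subset)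
  qed
  moreover have "x = y" if x: "x \<in> Q" and y: "y \<in> Q" and eq: "\<forall>c. g c x = g c y" for x y
  proof -
    have "fst x j = fst y j" for j
    proof -
      have "\<phi> j (fst x j) = \<phi> j (fst y j)"
        using GS_eqI[OF \<phi>c[OF x] \<phi>c[OF y]] eq by (auto simp: g_def)
      then show ?thesis using \<phi>(2)[of j] x y by (auto simp: inj_on_def)
    qed
    then show ?thesis using z x y by (simp add: prod_eq_iff fun_eq_iff)
  qed
  ultimately show ?thesis by blast
qed

lemma snd_hom: "(\<lambda>x. snd x) \<in> hom (WR n) integer_group"
  by (rule homI) (auto simp: WR_simps integer_group_def)

lemma snd_pow: "x \<in> carrier (WR n) \<Longrightarrow> snd (x [^]\<^bsub>WR n\<^esub> (s::int)) = s * snd x"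
  using hom_int_pow[OF snd_hom _ group_WR' group_integer_group] by simp

lemma snd_mult [simp]: "snd (x \<otimes>\<^bsub>WR n\<^esub> y) = snd x + snd y"
  by (simp add: WR_simps)

lemma fst_mult: "fst (x \<otimes>\<^bsub>WR n\<^esub> y) j = fst x j \<otimes>\<^bsub>G n\<^esub> fst y (j - snd x)"
  by (simp add: WR_simps)

lemma snd_inv [simp]: "x \<in> carrier (WR n) \<Longrightarrow> snd (inv\<^bsub>WR n\<^esub> x) = - snd x"
  by (simp add: WR_inv)

lemma snd_one [simp]: "snd \<one>\<^bsub>WR n\<^esub> = 0" and fst_one [simp]: "fst \<one>\<^bsub>WR n\<^esub> j = \<one>\<^bsub>G n\<^esub>"
  by (simp_all add: WR_simps)

lemma fst_carrier: "x \<in> carrier (WR n) \<Longrightarrow> fst x j \<in> carrier (G n)"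
  by (simp add: WR_simps)

lemma conj_fst:
  assumes T: "T \<in> carrier (WR n)" and y: "y \<in> carrier (WR n)" and y0: "snd y = 0"
  shows "fst (T \<otimes>\<^bsub>WR n\<^esub> y \<otimes>\<^bsub>WR n\<^esub> inv\<^bsub>WR n\<^esub> T) r
          = fst T r \<otimes>\<^bsub>G n\<^esub> fst y (r - snd T) \<otimes>\<^bsub>G n\<^esub> inv\<^bsub>G n\<^esub> (fst T r)"
  using T y y0 by (simp add: WR_inv WR_simps)

lemma caseB:
  assumes IH: "\<And>m P. subgroup P (G n) \<Longrightarrow> (derived (G n) ^^ m) P = {\<one>\<^bsub>G n\<^esub>} \<Longrightarrow> emb n P m"
    and Q: "subgroup Q (WR n)" and dl: "(derived (WR n) ^^ Suc k) Q = {\<one>\<^bsub>WR n\<^esub>}"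
    and nz: "\<exists>x\<in>Q. snd x \<noteq> 0"
  shows "\<exists>g::int\<times>int \<Rightarrow> (int \<Rightarrow> W) \<times> int \<Rightarrow> (int \<Rightarrow> W) \<times> int.
           (\<forall>c. g c \<in> hom ((WR n)\<lparr>carrier := Q\<rparr>) (WR k)) \<and> (\<forall>x\<in>Q. finite {c. g c x \<noteq> \<one>\<^bsub>WR k\<^esub>})
           \<and> (\<forall>x\<in>Q. \<forall>y\<in>Q. (\<forall>c. g c x = g c y) \<longrightarrow> x = y)"
proof -
  interpret A: group "G n" by (rule group_G)
  interpret B: group "WR n" by (rule group_WR')
  interpret C: group "G k" by (rule group_G)
  interpret D: group "WR k" by (rule group_WR')
  have Qc: "x \<in> carrier (WR n)" if "x \<in> Q" for x using Q that subgroup.mem_carrier by force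
  have Qinv: "inv\<^bsub>WR n\<^esub> x \<in> Q" if "x \<in> Q" for x using Q that subgroup.m_inv_closed by force
  have Qmul: "x \<otimes>\<^bsub>WR n\<^esub> y \<in> Q" if "x \<in> Q" "y \<in> Q" for x y using Q that subgroup.m_closed by force
  have Qone: "\<one>\<^bsub>WR n\<^esub> \<in> Q" using Q subgroup.one_closed by force
  have Qpow: "x [^]\<^bsub>WR n\<^esub> (s::int) \<in> Q" if "x \<in> Q" for x s
    using B.subgroup_int_pow_closed[OF Q that] .
  obtain t0 where t0: "t0 \<in> Q" "snd t0 > 0"
  proof -
    obtain x where x: "x \<in> Q" "snd x \<noteq> 0" using nz by blast
    show ?thesis
    proof (cases "snd x > 0")
      case True then show ?thesis using that x by blast
    next
      case False then show ?thesis using that[of "inv\<^bsub>WR n\<^esub> x"] x Qinv Qc by simp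
    qed
  qed
  define dn where "dn = (LEAST p::nat. p > 0 \<and> (\<exists>x\<in>Q. snd x = int p))"
  have ex: "\<exists>p::nat. p > 0 \<and> (\<exists>x\<in>Q. snd x = int p)"
    using t0 by (intro exI[of _ "nat (snd t0)"]) auto
  have dn: "dn > 0 \<and> (\<exists>x\<in>Q. snd x = int dn)"
    unfolding dn_def by (rule LeastI_ex) (rule ex)
  have dmin: "dn \<le> p" if "p > 0" "\<exists>x\<in>Q. snd x = int p" for p
    unfolding dn_def by (rule Least_le) (use that in simp)
  define d where "d = int dn"
  have d0: "d > 0" using dn by (simp add: d_def)
  obtain t where t: "t \<in> Q" "snd t = d" using dn d_def by blast
  have tc: "t \<in> carrier (WR n)" using Qc t by blast
  have tpow: "snd (t [^]\<^bsub>WR n\<^esub> (s::int)) = s * d" for s using snd_pow[OF tc] t by simp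
  have dvd: "d dvd snd x" if x: "x \<in> Q" for x
  proof (rule ccontr)
    assume nd: "\<not> d dvd snd x"
    let ?y = "x \<otimes>\<^bsub>WR n\<^esub> t [^]\<^bsub>WR n\<^esub> (- (snd x div d))"
    have "?y \<in> Q" using Qmul Qpow x t by blast
    moreover have "snd ?y = snd x mod d"
      using tpow by (simp add: minus_div_mult_eq_mod[symmetric])
    moreover have "snd x mod d = int (nat (snd x mod d))" using d0 by simp
    ultimately have E: "\<exists>z\<in>Q. snd z = int (nat (snd x mod d))" by (intro bexI[of _ ?y]) auto
    have P: "nat (snd x mod d) > 0"
    proof -
      have "snd x mod d \<noteq> 0" using nd by (simp add: dvd_eq_mod_eq_0)
      moreover have "snd x mod d \<ge> 0" using d0 by simp
      ultimately show ?thesis by simp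
    qed
    have "dn \<le> nat (snd x mod d)" by (rule dmin[OF P E])
    moreover have "snd x mod d < d" using d0 by simp
    moreover have "snd x mod d \<ge> 0" using d0 by simp
    ultimately show False using d_def le_nat_iff by auto
  qed
  define N where "N = {z\<in>Q. snd z = 0}"
  have N: "subgroup N (WR n)"
  proof (rule B.subgroupI)
    show "N \<subseteq> carrier (WR n)" using Qc N_def by blast
    have "\<one>\<^bsub>WR n\<^esub> \<in> N" unfolding N_def using Qone by simp
    then show "N \<noteq> {}" by blast
    show "inv\<^bsub>WR n\<^esub> a \<in> N" if "a \<in> N" for a using that Qinv Qc N_def by auto
    show "a \<otimes>\<^bsub>WR n\<^esub> b \<in> N" if "a \<in> N" "b \<in> N" for a b using that Qmul N_def by auto
  qed
  have Nz: "\<forall>z\<in>N. snd z = 0" using N_def by blast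
  have NQ: "N \<subseteq> Q" using N_def by blast
  define \<kappa> where "\<kappa> = (\<lambda>x::(int \<Rightarrow> W) \<times> int. snd x div d)"
  have \<kappa>d: "snd x = \<kappa> x * d" if "x \<in> Q" for x using dvd[OF that] by (simp add: \<kappa>_def)
  have \<kappa>mul: "\<kappa> (x \<otimes>\<^bsub>WR n\<^esub> y) = \<kappa> x + \<kappa> y" if "x \<in> Q" "y \<in> Q" for x y
  proof -
    have "snd (x \<otimes>\<^bsub>WR n\<^esub> y) = (\<kappa> x + \<kappa> y) * d" using \<kappa>d that by (simp add: algebra_simps)
    then show ?thesis using d0 by (simp add: \<kappa>_def)
  qed
  have tp: "t [^]\<^bsub>WR n\<^esub> (s::int) \<in> carrier (WR n)" for s using tc by simp
  have tcancel: "t [^]\<^bsub>WR n\<^esub> a \<otimes>\<^bsub>WR n\<^esub> (t [^]\<^bsub>WR n\<^esub> b \<otimes>\<^bsub>WR n\<^esub> w) = w"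
    if "a + b = 0" "w \<in> carrier (WR n)" for a b :: int and w
  proof -
    have "t [^]\<^bsub>WR n\<^esub> a \<otimes>\<^bsub>WR n\<^esub> (t [^]\<^bsub>WR n\<^esub> b \<otimes>\<^bsub>WR n\<^esub> w)
        = t [^]\<^bsub>WR n\<^esub> (a + b) \<otimes>\<^bsub>WR n\<^esub> w"
      using tc that(2) by (simp add: B.int_pow_mult[OF tc] B.m_assoc)
    then show ?thesis using that by simp
  qed
  define u where "u = (\<lambda>(j::int) x. t [^]\<^bsub>WR n\<^esub> (-j) \<otimes>\<^bsub>WR n\<^esub> x \<otimes>\<^bsub>WR n\<^esub> t [^]\<^bsub>WR n\<^esub> (j - \<kappa> x))"
  have uN: "u j x \<in> N" if "x \<in> Q" for j x
  proof -
    have "u j x \<in> Q" unfolding u_def using Qmul Qpow t that by blast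
    moreover have "snd (u j x) = 0" unfolding u_def using tpow \<kappa>d[OF that] by (simp add: algebra_simps)
    ultimately show ?thesis using N_def by blast
  qed
  have ucoc: "u j (x \<otimes>\<^bsub>WR n\<^esub> y) = u j x \<otimes>\<^bsub>WR n\<^esub> u (j - \<kappa> x) y" if "x \<in> Q" "y \<in> Q" for j x y
    using that Qc tp \<kappa>mul by (simp add: u_def B.m_assoc tcancel diff_diff_eq)
  define nx where "nx = (\<lambda>x. x \<otimes>\<^bsub>WR n\<^esub> t [^]\<^bsub>WR n\<^esub> (- \<kappa> x))"
  have nxc: "nx x \<in> carrier (WR n)" "snd (nx x) = 0" if "x \<in> Q" for x
    using that Qc tp tpow \<kappa>d by (auto simp: nx_def)
  have nxinv: "x = nx x \<otimes>\<^bsub>WR n\<^esub> t [^]\<^bsub>WR n\<^esub> (\<kappa> x)" if "x \<in> Q" for x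
  proof -
    have "nx x \<otimes>\<^bsub>WR n\<^esub> t [^]\<^bsub>WR n\<^esub> (\<kappa> x) = x \<otimes>\<^bsub>WR n\<^esub> (t [^]\<^bsub>WR n\<^esub> (- \<kappa> x) \<otimes>\<^bsub>WR n\<^esub> (t [^]\<^bsub>WR n\<^esub> (\<kappa> x) \<otimes>\<^bsub>WR n\<^esub> \<one>\<^bsub>WR n\<^esub>))"
      using that Qc tp by (simp add: nx_def B.m_assoc)
    also have "\<dots> = x" using tcancel[of "- \<kappa> x" "\<kappa> x" "\<one>\<^bsub>WR n\<^esub>"] that Qc by simp
    finally show ?thesis by simp
  qed
  have uconj: "fst (u j x) r = fst (t [^]\<^bsub>WR n\<^esub> (-j)) r \<otimes>\<^bsub>G n\<^esub> fst (nx x) (r + j * d)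
      \<otimes>\<^bsub>G n\<^esub> inv\<^bsub>G n\<^esub> (fst (t [^]\<^bsub>WR n\<^esub> (-j)) r)" if x: "x \<in> Q" for j x r
  proof -
    have e: "t [^]\<^bsub>WR n\<^esub> (j - \<kappa> x) = t [^]\<^bsub>WR n\<^esub> (- \<kappa> x) \<otimes>\<^bsub>WR n\<^esub> inv\<^bsub>WR n\<^esub> (t [^]\<^bsub>WR n\<^esub> (-j))"
      using tc B.int_pow_mult[OF tc, of "- \<kappa> x" j] B.int_pow_neg[OF tc, of "-j"] by simp
    have "u j x = t [^]\<^bsub>WR n\<^esub> (-j) \<otimes>\<^bsub>WR n\<^esub> nx x \<otimes>\<^bsub>WR n\<^esub> inv\<^bsub>WR n\<^esub> (t [^]\<^bsub>WR n\<^esub> (-j))"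
      unfolding u_def nx_def e using x Qc tp by (simp add: B.m_assoc)
    then show ?thesis using conj_fst[OF tp nxc[OF x]] tpow by simp
  qed
  have nxQ: "nx x \<in> N" if "x \<in> Q" for x
    using that nxc Qmul Qpow t N_def by (auto simp: nx_def)
  have derN: "derived (WR n) Q \<subseteq> N"
    unfolding derived_def
  proof (rule B.generate_subgroup_incl[OF _ N])
    show "derived_set (WR n) Q \<subseteq> N"
    proof
      fix c assume "c \<in> derived_set (WR n) Q"
      then obtain a b where ab: "a \<in> Q" "b \<in> Q"
        "c = a \<otimes>\<^bsub>WR n\<^esub> b \<otimes>\<^bsub>WR n\<^esub> inv\<^bsub>WR n\<^esub> a \<otimes>\<^bsub>WR n\<^esub> inv\<^bsub>WR n\<^esub> b" by blast
      then have "c \<in> Q" using Qmul Qinv by simp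
      moreover have "snd c = 0" using ab Qc by simp
      ultimately show "c \<in> N" using N_def by blast
    qed
  qed
  have key: "fst z r \<in> (\<lambda>z. fst z r) ` derived (WR n) Q" if z: "z \<in> N" for z r
  proof -
    have zc: "z \<in> carrier (WR n)" "snd z = 0" "z \<in> Q" using z N_def Qc by auto
    have "finite ((\<lambda>s. r - s * d) -` {j. fst z j \<noteq> \<one>\<^bsub>G n\<^esub>})"
      by (rule finite_vimageI) (use zc d0 in \<open>auto simp: WR_simps inj_def\<close>)
    then obtain s where s: "fst z (r - s * d) = \<one>\<^bsub>G n\<^esub>"
      using ex_new_if_finite[OF infinite_UNIV_int] by auto
    let ?T = "t [^]\<^bsub>WR n\<^esub> s"
    let ?c = "z \<otimes>\<^bsub>WR n\<^esub> ?T \<otimes>\<^bsub>WR n\<^esub> inv\<^bsub>WR n\<^esub> z \<otimes>\<^bsub>WR n\<^esub> inv\<^bsub>WR n\<^esub> ?T"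
    have cD: "?c \<in> derived (WR n) Q"
      unfolding derived_def using zc(3) Qpow[OF t(1)] by (blast intro: generate.incl)
    have iz: "inv\<^bsub>WR n\<^esub> z \<in> carrier (WR n)" "snd (inv\<^bsub>WR n\<^esub> z) = 0" using zc by auto
    have "?c = z \<otimes>\<^bsub>WR n\<^esub> (?T \<otimes>\<^bsub>WR n\<^esub> inv\<^bsub>WR n\<^esub> z \<otimes>\<^bsub>WR n\<^esub> inv\<^bsub>WR n\<^esub> ?T)"
      using zc tp by (simp add: B.m_assoc)
    then have "fst ?c r = fst z r \<otimes>\<^bsub>G n\<^esub> fst (?T \<otimes>\<^bsub>WR n\<^esub> inv\<^bsub>WR n\<^esub> z \<otimes>\<^bsub>WR n\<^esub> inv\<^bsub>WR n\<^esub> ?T) r"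
      using zc by (simp add: fst_mult)
    also have "fst (?T \<otimes>\<^bsub>WR n\<^esub> inv\<^bsub>WR n\<^esub> z \<otimes>\<^bsub>WR n\<^esub> inv\<^bsub>WR n\<^esub> ?T) r = \<one>\<^bsub>G n\<^esub>"
      using conj_fst[OF tp iz] tpow zc s fst_carrier[OF tp] by (simp add: WR_inv)
    finally have "fst ?c r = fst z r" using zc fst_carrier by simp
    then show ?thesis using cD by (metis (no_types, lifting) image_eqI)
  qed
  let ?P = "\<lambda>r. (\<lambda>z. fst z r) ` N"
  have ph: "(\<lambda>z. fst z r) \<in> hom ((WR n)\<lparr>carrier := N\<rparr>) (G n)" for r by (rule proj_hom[OF N Nz])
  have Psg: "subgroup (?P r) (G n)" for r
    by (rule hom_sub_imgsub[OF B.is_group A.is_group N ph])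
  have "\<exists>\<phi>. \<phi> \<in> hom ((G n)\<lparr>carrier := ?P r\<rparr>) (G k) \<and> inj_on \<phi> (?P r)" for r
  proof -
    have "(derived (G n) ^^ k) (?P r) \<subseteq> (derived (G n) ^^ k) ((\<lambda>z. fst z r) ` derived (WR n) Q)"
      by (rule A.mono_exp_of_derived) (use key in blast)
    also have "\<dots> = (\<lambda>z. fst z r) ` ((derived (WR n) ^^ k) (derived (WR n) Q))"
      by (rule derived_hom_sub[OF B.is_group A.is_group N ph derN])
    also have "(derived (WR n) ^^ k) (derived (WR n) Q) = (derived (WR n) ^^ Suc k) Q"
      by (simp only: funpow_Suc_right comp_def)
    finally have "(derived (G n) ^^ k) (?P r) \<subseteq> {\<one>\<^bsub>G n\<^esub>}" using dl by simp
    moreover have "\<one>\<^bsub>G n\<^esub> \<in> (derived (G n) ^^ k) (?P r)"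
      using subgroup.one_closed[OF A.exp_of_derived_is_subgroup[OF Psg]] by simp
    ultimately have "(derived (G n) ^^ k) (?P r) = {\<one>\<^bsub>G n\<^esub>}" by blast
    then show ?thesis using IH[OF Psg] unfolding emb_def by blast
  qed
  then obtain \<phi> where \<phi>: "\<And>r. \<phi> r \<in> hom ((G n)\<lparr>carrier := ?P r\<rparr>) (G k)" "\<And>r. inj_on (\<phi> r) (?P r)"
    by metis
  have uP: "fst (u j x) r \<in> ?P r" if "x \<in> Q" for j x r using uN[OF that] by blast
  have \<phi>1: "\<phi> r \<one>\<^bsub>G n\<^esub> = \<one>\<^bsub>G k\<^esub>" for r
    by (rule hom_one_sub[OF A.is_group C.is_group Psg \<phi>(1)])
  have \<phi>c: "\<phi> r v \<in> carrier (G k)" if "v \<in> ?P r" for r v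
    using \<phi>(1)[of r] that by (auto simp: hom_def)
  have \<phi>mul: "\<phi> r (v \<otimes>\<^bsub>G n\<^esub> w) = \<phi> r v \<otimes>\<^bsub>G k\<^esub> \<phi> r w" if "v \<in> ?P r" "w \<in> ?P r" for r v w
    using \<phi>(1)[of r] that by (auto simp: hom_def)
  have tjc: "fst (t [^]\<^bsub>WR n\<^esub> (s::int)) r \<in> carrier (G n)" for s r using fst_carrier[OF tp] .
  have ufin: "finite {j. fst (u j x) r \<noteq> \<one>\<^bsub>G n\<^esub>}" if x: "x \<in> Q" for x r
  proof -
    have "{j. fst (u j x) r \<noteq> \<one>\<^bsub>G n\<^esub>} \<subseteq> (\<lambda>j. r + j * d) -` {i. fst (nx x) i \<noteq> \<one>\<^bsub>G n\<^esub>}"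
      using uconj[OF x] tjc by auto
    moreover have "finite ((\<lambda>j. r + j * d) -` {i. fst (nx x) i \<noteq> \<one>\<^bsub>G n\<^esub>})"
      by (rule finite_vimageI) (use nxc[OF x] d0 in \<open>auto simp: WR_simps inj_def\<close>)
    ultimately show ?thesis by (rule finite_subset)
  qed
  define g :: "int\<times>int \<Rightarrow> (int \<Rightarrow> W) \<times> int \<Rightarrow> (int \<Rightarrow> W) \<times> int"
    where "g = (\<lambda>c x. if snd c = 0 \<and> 0 \<le> fst c \<and> fst c < d
                 then (\<lambda>j. \<phi> (fst c) (fst (u j x) (fst c)), \<kappa> x) else \<one>\<^bsub>WR k\<^esub>)"
  have "g c \<in> hom ((WR n)\<lparr>carrier := Q\<rparr>) (WR k)" for c
  proof (rule homI)
    fix x assume "x \<in> carrier ((WR n)\<lparr>carrier := Q\<rparr>)"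
    then have x: "x \<in> Q" by simp
    have "{j. \<phi> (fst c) (fst (u j x) (fst c)) \<noteq> \<one>\<^bsub>G k\<^esub>} \<subseteq> {j. fst (u j x) (fst c) \<noteq> \<one>\<^bsub>G n\<^esub>}"
      using \<phi>1 by auto
    then have "finite {j. \<phi> (fst c) (fst (u j x) (fst c)) \<noteq> \<one>\<^bsub>G k\<^esub>}"
      using ufin[OF x] by (rule finite_subset)
    then show "g c x \<in> carrier (WR k)"
      using \<phi>c uP[OF x] by (auto simp: g_def WR_simps)
  next
    fix x y assume "x \<in> carrier ((WR n)\<lparr>carrier := Q\<rparr>)" "y \<in> carrier ((WR n)\<lparr>carrier := Q\<rparr>)"
    then have x: "x \<in> Q" and y: "y \<in> Q" by simp_all
    have "fst (u j (x \<otimes>\<^bsub>WR n\<^esub> y)) r = fst (u j x) r \<otimes>\<^bsub>G n\<^esub> fst (u (j - \<kappa> x) y) r" for j r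
      using ucoc[OF x y] Nz uN[OF x] by (simp add: fst_mult)
    then have "\<phi> r (fst (u j (x \<otimes>\<^bsub>WR n\<^esub> y)) r) = \<phi> r (fst (u j x) r) \<otimes>\<^bsub>G k\<^esub> \<phi> r (fst (u (j - \<kappa> x) y) r)" for j r
      using \<phi>mul uP x y by simp
    then show "g c (x \<otimes>\<^bsub>(WR n)\<lparr>carrier := Q\<rparr>\<^esub> y) = g c x \<otimes>\<^bsub>WR k\<^esub> g c y"
      using \<kappa>mul[OF x y] by (auto simp: g_def WR_simps)
  qed
  moreover have "finite {c. g c x \<noteq> \<one>\<^bsub>WR k\<^esub>}" if x: "x \<in> Q" for x
  proof -
    have "{c. g c x \<noteq> \<one>\<^bsub>WR k\<^esub>} \<subseteq> {0..<d} \<times> {0}" by (auto simp: g_def)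
    then show ?thesis by (rule finite_subset) simp
  qed
  moreover have "x = y" if x: "x \<in> Q" and y: "y \<in> Q" and eq: "\<forall>c. g c x = g c y" for x y
  proof -
    have k: "\<kappa> x = \<kappa> y" using eq[rule_format, of "(0,0)"] d0 by (simp add: g_def)
    have "fst (nx x) i = fst (nx y) i" for i
    proof -
      define r where "r = i mod d"
      define j where "j = i div d"
      have i: "i = r + j * d" unfolding r_def j_def by simp
      have r: "0 \<le> r" "r < d" using d0 unfolding r_def by simp_all
      have "\<phi> r (fst (u j x) r) = \<phi> r (fst (u j y) r)"
        using eq[rule_format, of "(r,0)"] r by (simp add: g_def fun_eq_iff)
      then have "fst (u j x) r = fst (u j y) r"
        using \<phi>(2)[of r] uP x y by (meson inj_onD)
      then show ?thesis using uconj[OF x] uconj[OF y] tjc fst_carrier nxc x y i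
        by (simp add: A.m_assoc)
    qed
    then have "nx x = nx y" using nxc[OF x] nxc[OF y] by (simp add: prod_eq_iff fun_eq_iff)
    then show "x = y" using nxinv[OF x] nxinv[OF y] k by simp
  qed
  ultimately show ?thesis by blast
qed

lemma emb_triv:
  assumes "H = {\<one>\<^bsub>G n\<^esub>}"
  shows "emb n H m"
proof -
  interpret C: group "G m" by (rule group_G)
  have "(\<lambda>_. \<one>\<^bsub>G m\<^esub>) \<in> hom ((G n)\<lparr>carrier := H\<rparr>) (G m)"
    by (rule homI) auto
  moreover have "inj_on (\<lambda>_. \<one>\<^bsub>G m\<^esub>) H" using assms by simp
  ultimately show ?thesis unfolding emb_def by blast
qed

lemma main:
  "subgroup H (G n) \<Longrightarrow> (derived (G n) ^^ m) H = {\<one>\<^bsub>G n\<^esub>} \<Longrightarrow> emb n H m"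
proof (induction n arbitrary: m H)
  case 0
  have "H \<subseteq> {Leaf}" using subgroup.subset[OF 0(1)] by (simp add: G_def)
  moreover have "\<one>\<^bsub>G 0\<^esub> \<in> H" using subgroup.one_closed[OF 0(1)] .
  ultimately have "H = {\<one>\<^bsub>G 0\<^esub>}" by (auto simp: G_def)
  then show ?case by (rule emb_triv)
next
  case (Suc n)
  interpret A: group "G n" by (rule group_G)
  interpret B: group "WR n" by (rule group_WR')
  interpret C: group "G (Suc n)" by (rule group_G)
  have Hsg: "subgroup H (G (Suc n))" by (rule Suc.prems(1))
  have Hc: "x \<in> carrier (G (Suc n))" if "x \<in> H" for x using Hsg that subgroup.mem_carrier by force
  show ?case
  proof (cases m)
    case 0
    then show ?thesis using Suc.prems(2) by (simp add: emb_triv)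
  next
    case (Suc k)
    interpret D: group "WR k" by (rule group_WR')
    let ?Q = "\<lambda>i. (\<lambda>x. kids x i) ` H"
    have kh: "(\<lambda>x. kids x i) \<in> hom ((G (Suc n))\<lparr>carrier := H\<rparr>) (WR n)" for i
      by (rule homI) (auto simp: GS_elem Hc)
    have Qsg: "subgroup (?Q i) (WR n)" for i
      by (rule hom_sub_imgsub[OF C.is_group B.is_group Hsg kh])
    have Qdl: "(derived (WR n) ^^ Suc k) (?Q i) = {\<one>\<^bsub>WR n\<^esub>}" for i
    proof -
      have "(derived (WR n) ^^ Suc k) (?Q i) = (\<lambda>x. kids x i) ` ((derived (G (Suc n)) ^^ Suc k) H)"
        by (rule derived_hom_sub[OF C.is_group B.is_group Hsg kh]) simp
      also have "\<dots> = {\<one>\<^bsub>WR n\<^esub>}" using Suc.prems(2) \<open>m = Suc k\<close> by simp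
      finally show ?thesis .
    qed
    have "\<exists>g::int\<times>int \<Rightarrow> (int \<Rightarrow> W) \<times> int \<Rightarrow> (int \<Rightarrow> W) \<times> int.
           (\<forall>c. g c \<in> hom ((WR n)\<lparr>carrier := ?Q i\<rparr>) (WR k)) \<and> (\<forall>x\<in>?Q i. finite {c. g c x \<noteq> \<one>\<^bsub>WR k\<^esub>})
           \<and> (\<forall>x\<in>?Q i. \<forall>y\<in>?Q i. (\<forall>c. g c x = g c y) \<longrightarrow> x = y)" for i
    proof (cases "\<forall>x\<in>?Q i. snd x = 0")
      case True
      show ?thesis by (rule caseA[OF Suc.IH Qsg Qdl True])
    next
      case False
      then have "\<exists>x\<in>?Q i. snd x \<noteq> 0" by blast
      show ?thesis by (rule caseB[OF Suc.IH Qsg Qdl \<open>\<exists>x\<in>?Q i. snd x \<noteq> 0\<close>])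
    qed
    then have "\<forall>i. \<exists>g::int\<times>int \<Rightarrow> (int \<Rightarrow> W) \<times> int \<Rightarrow> (int \<Rightarrow> W) \<times> int.
           (\<forall>c. g c \<in> hom ((WR n)\<lparr>carrier := ?Q i\<rparr>) (WR k)) \<and> (\<forall>x\<in>?Q i. finite {c. g c x \<noteq> \<one>\<^bsub>WR k\<^esub>})
           \<and> (\<forall>x\<in>?Q i. \<forall>y\<in>?Q i. (\<forall>c. g c x = g c y) \<longrightarrow> x = y)" by blast
    then have "\<exists>g::int \<Rightarrow> int\<times>int \<Rightarrow> (int \<Rightarrow> W) \<times> int \<Rightarrow> (int \<Rightarrow> W) \<times> int. \<forall>i. (\<forall>c. g i c \<in> hom ((WR n)\<lparr>carrier := ?Q i\<rparr>) (WR k)) \<and> (\<forall>x\<in>?Q i. finite {c. g i c x \<noteq> \<one>\<^bsub>WR k\<^esub>})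
           \<and> (\<forall>x\<in>?Q i. \<forall>y\<in>?Q i. (\<forall>c. g i c x = g i c y) \<longrightarrow> x = y)" by (rule choice)
    then obtain g :: "int \<Rightarrow> int\<times>int \<Rightarrow> (int \<Rightarrow> W) \<times> int \<Rightarrow> (int \<Rightarrow> W) \<times> int" where gall: "\<forall>i. (\<forall>c. g i c \<in> hom ((WR n)\<lparr>carrier := ?Q i\<rparr>) (WR k)) \<and> (\<forall>x\<in>?Q i. finite {c. g i c x \<noteq> \<one>\<^bsub>WR k\<^esub>})
           \<and> (\<forall>x\<in>?Q i. \<forall>y\<in>?Q i. (\<forall>c. g i c x = g i c y) \<longrightarrow> x = y)"
      by blast
    have g: "\<And>i c. g i c \<in> hom ((WR n)\<lparr>carrier := ?Q i\<rparr>) (WR k)"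
      "\<And>i x. x \<in> ?Q i \<Longrightarrow> finite {c. g i c x \<noteq> \<one>\<^bsub>WR k\<^esub>}"
      "\<And>i x y. x \<in> ?Q i \<Longrightarrow> y \<in> ?Q i \<Longrightarrow> (\<forall>c. g i c x = g i c y) \<Longrightarrow> x = y"
      using gall by blast+
    have g1: "g i c \<one>\<^bsub>WR n\<^esub> = \<one>\<^bsub>WR k\<^esub>" for i c
      by (rule hom_one_sub[OF B.is_group D.is_group Qsg g(1)])
    define F :: "int \<times> int \<times> int \<Rightarrow> W \<Rightarrow> (int \<Rightarrow> W) \<times> int"
      where "F = (\<lambda>c x. g (fst c) (snd c) (kids x (fst c)))"
    have "\<exists>\<phi>. \<phi> \<in> hom ((G (Suc n))\<lparr>carrier := H\<rparr>) (G (Suc k)) \<and> inj_on \<phi> (carrier ((G (Suc n))\<lparr>carrier := H\<rparr>))"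
    proof (rule combine)
      fix c
      show "F c \<in> hom ((G (Suc n))\<lparr>carrier := H\<rparr>) (WR k)"
      proof (rule homI)
        fix x assume "x \<in> carrier ((G (Suc n))\<lparr>carrier := H\<rparr>)"
        then have "kids x (fst c) \<in> ?Q (fst c)" by simp
        then show "F c x \<in> carrier (WR k)" using g(1)[of "fst c" "snd c"] by (auto simp: F_def hom_def)
      next
        fix x y assume "x \<in> carrier ((G (Suc n))\<lparr>carrier := H\<rparr>)" "y \<in> carrier ((G (Suc n))\<lparr>carrier := H\<rparr>)"
        then have "kids x (fst c) \<in> ?Q (fst c)" "kids y (fst c) \<in> ?Q (fst c)" by simp_all
        then show "F c (x \<otimes>\<^bsub>(G (Suc n))\<lparr>carrier := H\<rparr>\<^esub> y) = F c x \<otimes>\<^bsub>WR k\<^esub> F c y"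
          using g(1)[of "fst c" "snd c"] by (auto simp: F_def hom_def)
      qed
    next
      fix x assume "x \<in> carrier ((G (Suc n))\<lparr>carrier := H\<rparr>)"
      then have x: "x \<in> H" by simp
      have "{c. F c x \<noteq> \<one>\<^bsub>WR k\<^esub>} \<subseteq> Sigma {i. kids x i \<noteq> \<one>\<^bsub>WR n\<^esub>} (\<lambda>i. {c. g i c (kids x i) \<noteq> \<one>\<^bsub>WR k\<^esub>})"
        using g1 by (auto simp: F_def)
      moreover have "finite {i. kids x i \<noteq> \<one>\<^bsub>WR n\<^esub>}" using GS_elem(3)[OF Hc[OF x]] .
      moreover have "finite {c. g i c (kids x i) \<noteq> \<one>\<^bsub>WR k\<^esub>}" for i
        using g(2)[of "kids x i" i] x by blast
      ultimately show "finite {c. F c x \<noteq> \<one>\<^bsub>WR k\<^esub>}" by (meson finite_SigmaI finite_subset)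
    next
      fix x y assume "x \<in> carrier ((G (Suc n))\<lparr>carrier := H\<rparr>)" "y \<in> carrier ((G (Suc n))\<lparr>carrier := H\<rparr>)"
        and eq: "\<forall>c. F c x = F c y"
      then have x: "x \<in> H" and y: "y \<in> H" by simp_all
      have "kids x i = kids y i" for i
      proof -
        have "\<forall>c. g i c (kids x i) = g i c (kids y i)" using eq[rule_format, of "(i, _)"] by (simp add: F_def)
        then show ?thesis using g(3)[of "kids x i" i "kids y i"] x y by blast
      qed
      then show "x = y" by (rule GS_eqI[OF Hc[OF x] Hc[OF y]])
    qed
    then show ?thesis unfolding emb_def \<open>m = Suc k\<close> by simp
  qed
qed

theorem lemma4:
  fixes m n :: nat and H :: "W set"
  assumes "m \<le> n"
    and "subgroup H (G n)"
    and "has_derived_length (G n) H m"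
  shows "\<exists>K. subgroup K (G m) \<and> (G n)\<lparr>carrier := H\<rparr> \<cong> (G m)\<lparr>carrier := K\<rparr>"
proof -
  have "(derived (G n) ^^ m) H = {\<one>\<^bsub>G n\<^esub>}" using assms(3) by (simp add: has_derived_length_def)
  then obtain \<phi> where \<phi>: "\<phi> \<in> hom ((G n)\<lparr>carrier := H\<rparr>) (G m)" "inj_on \<phi> H"
    using main[OF assms(2)] unfolding emb_def by blast
  have sg: "subgroup (\<phi> ` H) (G m)"
    by (rule hom_sub_imgsub[OF group_G group_G assms(2) \<phi>(1)])
  have "\<phi> \<in> hom ((G n)\<lparr>carrier := H\<rparr>) ((G m)\<lparr>carrier := \<phi> ` H\<rparr>)"
    using \<phi>(1) by (auto simp: hom_def)
  moreover have "bij_betw \<phi> H (\<phi> ` H)" using \<phi>(2) by (rule inj_on_imp_bij_betw)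
  ultimately have "\<phi> \<in> iso ((G n)\<lparr>carrier := H\<rparr>) ((G m)\<lparr>carrier := \<phi> ` H\<rparr>)"
    by (simp add: iso_def)
  then have "(G n)\<lparr>carrier := H\<rparr> \<cong> (G m)\<lparr>carrier := \<phi> ` H\<rparr>" unfolding is_iso_def by blast
  then show ?thesis using sg by blast
qed

end
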